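(* Let $G$ be a finite directed graph. If $R\subseteq V(G)$ is nonempty and $\mathrm{DT}_R(G)$ has more than one maximal face, then there is an edge $(x\rightarrow y)\in E(G)$ which is nice in $\mathrm{DT}_R(G)$.
   Context: A directed forest in $G$ is a set of edges of $G$ which, viewed as a graph on $V(G)$, is acyclic and has at most one edge directed to each vertex; its roots are the vertices with no forest edge directed to them. $\mathrm{DT}(G)$ is the simplicial complex with vertex set $E(G)$ whose simplices are the directed forests; $\mathrm{DT}_R(G)$ is the subcomplex generated by the directed forests with root set exactly $R$. An edge $(x\rightarrow y)$ of $G$ is nice in a subcomplex $\Delta$ of $\mathrm{DT}(G)$ if (i) there is an edge $(z\rightarrow y)$ in $\Delta$ with $z\ne x$, and (ii) every forest $F\in\Delta$ without an edge directed to $y$ satisfies $F\cup\{(x\rightarrow y)\}\in\Delta$. *)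

theory Defs
  imports Main
begin

text \<open>A finite directed graph is given by a finite vertex set V and an edge set
  E \<subseteq> V \<times> V; an edge (x,y) is the edge x \<rightarrow> y.\<close>

definition digraph :: "'a set \<Rightarrow> ('a \<times> 'a) set \<Rightarrow> bool" where
  "digraph V E \<longleftrightarrow> finite V \<and> E \<subseteq> V \<times> V"

definition directed_forest :: "'a set \<Rightarrow> ('a \<times> 'a) set \<Rightarrow> ('a \<times> 'a) set \<Rightarrow> bool" where
  "directed_forest V E F \<longleftrightarrow> F \<subseteq> E \<and> acyclic F \<and>
     (\<forall>x y z. (x, y) \<in> F \<and> (z, y) \<in> F \<longrightarrow> x = z)"

definition roots :: "'a set \<Rightarrow> ('a \<times> 'a) set \<Rightarrow> 'a set" where
  "roots V F = {v \<in> V. \<not> (\<exists>u. (u, v) \<in> F)}"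

definition DT :: "'a set \<Rightarrow> ('a \<times> 'a) set \<Rightarrow> ('a \<times> 'a) set set" where
  "DT V E = {F. directed_forest V E F}"

definition DT_R :: "'a set \<Rightarrow> ('a \<times> 'a) set \<Rightarrow> 'a set \<Rightarrow> ('a \<times> 'a) set set" where
  "DT_R V E R = {F. \<exists>F'. directed_forest V E F' \<and> roots V F' = R \<and> F \<subseteq> F'}"

definition maximal_face :: "('a \<times> 'a) set set \<Rightarrow> ('a \<times> 'a) set \<Rightarrow> bool" where
  "maximal_face \<Delta> F \<longleftrightarrow> F \<in> \<Delta> \<and> \<not> (\<exists>F'\<in>\<Delta>. F \<subset> F')"

text \<open>An edge (x \<rightarrow> y) is nice in the subcomplex \<Delta>.  "An edge in \<Delta>" means a vertex
  of \<Delta>, i.e. a singleton face.\<close>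
definition nice :: "('a \<times> 'a) set set \<Rightarrow> 'a \<times> 'a \<Rightarrow> bool" where
  "nice \<Delta> e \<longleftrightarrow> (case e of (x, y) \<Rightarrow>
     (\<exists>z. z \<noteq> x \<and> {(z, y)} \<in> \<Delta>) \<and>
     (\<forall>F\<in>\<Delta>. \<not> (\<exists>u. (u, y) \<in> F) \<longrightarrow> insert (x, y) F \<in> \<Delta>))"

end

theory Submission
  imports Defs
begin

lemma usable_in_forest:
  assumes "{e} \<in> DT_R V E R"
  shows "\<exists>F'. directed_forest V E F' \<and> roots V F' = R \<and> e \<in> F'"
  using assms unfolding DT_R_def by auto

lemma usable_props:
  assumes "{(a,b)} \<in> DT_R V E R"
  shows "(a,b) \<in> E \<and> b \<notin> R"
proof -
  obtain F' where F': "directed_forest V E F'" "roots V F' = R" "(a,b) \<in> F'"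
    using usable_in_forest[OF assms] by blast
  have "(a,b) \<in> E" using F' unfolding directed_forest_def by auto
  moreover have "b \<notin> R" using F' unfolding roots_def by auto
  ultimately show ?thesis by blast
qed

lemma face_usable:
  assumes "F \<in> DT_R V E R" "e \<in> F"
  shows "{e} \<in> DT_R V E R"
  using assms unfolding DT_R_def by auto

lemma full_parent:
  assumes "roots V T = R" "v \<in> V" "v \<notin> R"
  shows "\<exists>p. (p,v) \<in> T"
  using assms unfolding roots_def by auto

lemma max_full:
  assumes "maximal_face (DT_R V E R) F"
  shows "directed_forest V E F \<and> roots V F = R"
proof -
  from assms have "F \<in> DT_R V E R" unfolding maximal_face_def by auto
  then obtain F' where F': "directed_forest V E F'" "roots V F' = R" "F \<subseteq> F'"
    unfolding DT_R_def by auto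
  have "F' \<in> DT_R V E R" using F' unfolding DT_R_def by auto
  then have "F = F'" using assms F'(3) unfolding maximal_face_def by auto
  then show ?thesis using F' by auto
qed

lemma nice_crit:
  assumes dg: "digraph V E"
    and ux: "{(x,y)} \<in> DT_R V E R" and uz: "{(z,y)} \<in> DT_R V E R" and xz: "x \<noteq> z"
    and nr: "(y,x) \<notin> {e. {e} \<in> DT_R V E R}\<^sup>*"
  shows "nice (DT_R V E R) (x,y)"
  unfolding nice_def
proof (simp, intro conjI ballI impI)
  show "\<exists>za. za \<noteq> x \<and> {(za, y)} \<in> DT_R V E R" using uz xz by auto
next
  fix F assume FD: "F \<in> DT_R V E R" and noy: "\<forall>u. (u, y) \<notin> F"
  let ?U = "{e. {e} \<in> DT_R V E R}"
  obtain F' where F': "directed_forest V E F'" "roots V F' = R" "F \<subseteq> F'"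
    using FD unfolding DT_R_def by auto
  have xyE: "(x,y) \<in> E" and yR: "y \<notin> R" using usable_props[OF ux] by auto
  have yV: "y \<in> V" using xyE dg unfolding digraph_def by auto
  obtain w where w: "(w,y) \<in> F'" using full_parent[OF F'(2) yV yR] by auto
  define F'' where "F'' = insert (x,y) (F' - {(w,y)})"
  have F'U: "F' \<subseteq> ?U"
  proof
    fix e assume "e \<in> F'"
    then show "e \<in> ?U" using F' unfolding DT_R_def by auto
  qed
  have uniq: "\<And>a b c. (a,b) \<in> F' \<Longrightarrow> (c,b) \<in> F' \<Longrightarrow> a = c"
    using F'(1) unfolding directed_forest_def by blast
  have "directed_forest V E F''"
    unfolding directed_forest_def
  proof (intro conjI allI impI)
    show "F'' \<subseteq> E" using F'(1) xyE unfolding F''_def directed_forest_def by auto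
  next
    have ac: "acyclic (F' - {(w,y)})"
      using F'(1) acyclic_subset unfolding directed_forest_def by blast
    have "(F' - {(w,y)})\<^sup>* \<subseteq> ?U\<^sup>*"
      using F'U by (intro rtrancl_mono) auto
    then have "(y,x) \<notin> (F' - {(w,y)})\<^sup>*" using nr by auto
    then show "acyclic F''" unfolding F''_def using ac by (simp add: acyclic_insert)
  next
    fix a b c assume "(a, b) \<in> F'' \<and> (c, b) \<in> F''"
    then show "a = c" unfolding F''_def using uniq w by auto
  qed
  moreover have "roots V F'' = R"
  proof -
    have "roots V F'' = roots V F'"
      unfolding roots_def F''_def using w by auto
    then show ?thesis using F'(2) by simp
  qed
  moreover have "insert (x,y) F \<subseteq> F''"
    unfolding F''_def using F'(3) noy by auto
  ultimately show "insert (x, y) F \<in> DT_R V E R" unfolding DT_R_def by auto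
qed

theorem lemma2p6:
  fixes V :: "'a set" and E :: "('a \<times> 'a) set" and R :: "'a set"
  assumes "digraph V E"
    and "R \<subseteq> V" and "R \<noteq> {}"
    and "\<exists>F1 F2. F1 \<noteq> F2 \<and> maximal_face (DT_R V E R) F1 \<and> maximal_face (DT_R V E R) F2"
  shows "\<exists>e\<in>E. nice (DT_R V E R) e"
proof (rule ccontr)
  assume contra: "\<not> ?thesis"
  let ?U = "{e. {e} \<in> DT_R V E R}"
  have key: "(y,x) \<in> ?U\<^sup>*" if "(x,y) \<in> ?U" "(z,y) \<in> ?U" "x \<noteq> z" for x y z
  proof (rule ccontr)
    assume "(y,x) \<notin> ?U\<^sup>*"
    then have "nice (DT_R V E R) (x,y)" using nice_crit[OF assms(1)] that by auto
    moreover have "(x,y) \<in> E" using usable_props[of x y V E R] that by auto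
    ultimately show False using contra by auto
  qed
  obtain T1 T2 where T: "T1 \<noteq> T2" "maximal_face (DT_R V E R) T1" "maximal_face (DT_R V E R) T2"
    using assms(4) by auto
  have f1: "directed_forest V E T1" "roots V T1 = R" and f2: "directed_forest V E T2" "roots V T2 = R"
    using max_full[OF T(2)] max_full[OF T(3)] by auto
  have T1D: "T1 \<in> DT_R V E R" and T2D: "T2 \<in> DT_R V E R"
    using T unfolding maximal_face_def by auto
  have "\<not> T1 \<subseteq> T2"
    using T T2D unfolding maximal_face_def by auto
  then obtain a y where ay: "(a,y) \<in> T1" "(a,y) \<notin> T2" by auto
  have ua: "(a,y) \<in> ?U" using face_usable[OF T1D ay(1)] by auto
  then have "(a,y) \<in> E" "y \<notin> R" using usable_props[of a y V E R] by auto
  then have "y \<in> V" using assms(1) unfolding digraph_def by auto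
  then obtain b where b: "(b,y) \<in> T2" using full_parent[OF f2(2)] \<open>y \<notin> R\<close> by auto
  have ub: "(b,y) \<in> ?U" using face_usable[OF T2D b] by auto
  have "a \<noteq> b" using ay b by auto
  then have "(y,a) \<in> ?U\<^sup>*" by (rule key[OF ua ub])
  then have "(a,a) \<in> ?U\<^sup>+" by (rule rtrancl_into_trancl2[OF ua])
  then have ne: "{c. (c,c) \<in> ?U\<^sup>+} \<noteq> {}" by auto
  have "finite T1" using f1(1) assms(1) unfolding directed_forest_def digraph_def
    by (metis finite_cartesian_product finite_subset)
  moreover have "acyclic T1" using f1(1) unfolding directed_forest_def by auto
  ultimately have "wf T1" by (rule finite_acyclic_wf)
  then obtain c where c: "c \<in> {c. (c,c) \<in> ?U\<^sup>+}"
    and cmin: "\<And>p. (p,c) \<in> T1 \<Longrightarrow> p \<notin> {c. (c,c) \<in> ?U\<^sup>+}"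
    using wfE_min[of T1 _ "{c. (c,c) \<in> ?U\<^sup>+}"] ne by auto
  from c have "(c,c) \<in> ?U\<^sup>+" by simp
  then obtain q where q: "(c,q) \<in> ?U\<^sup>*" "(q,c) \<in> ?U"
    using tranclD2[of c c ?U] by auto
  have "c \<notin> R" "(q,c) \<in> E" using usable_props[of q c V E R] q(2) by auto
  then have "c \<in> V" using assms(1) unfolding digraph_def by auto
  then obtain p where p: "(p,c) \<in> T1" using full_parent[OF f1(2)] \<open>c \<notin> R\<close> by auto
  have up: "(p,c) \<in> ?U" using face_usable[OF T1D p] by auto
  have pnot: "(p,p) \<notin> ?U\<^sup>+" using cmin[OF p] by auto
  have "p \<noteq> q"
  proof
    assume "p = q"
    then have "(p,p) \<in> ?U\<^sup>+" using rtrancl_into_trancl2[OF q(2) q(1)] by simp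
    then show False using pnot by simp
  qed
  then have "(c,p) \<in> ?U\<^sup>*" by (rule key[OF up q(2)])
  then have "(p,p) \<in> ?U\<^sup>+" by (rule rtrancl_into_trancl2[OF up])
  then show False using pnot by simp
qed

end
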